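(* Let $k\ge 1$. Let $\mathcal M^\circ_{2k+1,0}$ (resp. $\mathcal M^\circ_{2k+1,1}$) be the set of elements of $\mathcal M^\circ_{2k+1}$ whose central square $k+1$ is land (resp. water). Then $\mathrm{red}\circ\mathrm{contr}$ restricts to bijections $\mathcal M^\circ_{2k+1,0}\to\mathcal N_k$ and $\mathcal M^\circ_{2k+1,1}\to\mathcal N_{k,1}\cup\{R_{\mathrm{land}}\}$. Consequently $M^\circ_{2k+1} = N_k+N_{k,1}+1 = N_k + N_{k+1,2}$.
   Context: Colorings. Each square is colored water or land. Two distinct squares are adjacent if they share an edge after all edge identifications; a set of squares is connected if its induced adjacency graph is connected (empty set counts as connected). (N1): the water is connected. (N2$\circ$): no interior (non-boundary) vertex of the tiling has all of the squares incident to it water. A $2\times k$ Nurikabe rectangle is a coloring of the $2\times k$ grid (columns $1,\dots,k$ left to right, no identifications) with connected water and no $2\times 2$ block of water squares; $\mathcal N_k$ is the set of these, $N_k=|\mathcal N_k|$; $\mathcal N_{k,i}$ is the subset with exactly $i$ water squares in column $k$, $N_{k,i}=|\mathcal N_{k,i}|$. $R_{\mathrm{land}}\in\mathcal N_k$ is the all-land rectangle. Tile $[0,n]\times[0,1]$ by unit squares $[j-1,j]\times[0,1]$, called square $j$. The $1\times n$ Möbius strip identifies $(x,1)\sim(n-x,0)$ for $x\in[0,n]$; its boundary is the image of the vertical sides. $\mathcal M^\circ_n$ is the set of colorings of the $1\times n$ Möbius strip satisfying (N1) and (N2$\circ$), $M^\circ_n=|\mathcal M^\circ_n|$. Contraction: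 for a coloring of the $1\times(2k+1)$ Möbius strip, $\mathrm{contr}$ gives the coloring of the $1\times 2k$ Möbius strip obtained by deleting square $k+1$, with square $j\le k$ keeping position $j$ and square $j\ge k+2$ moving to position $j-1$. Rectangular reduction: for a coloring of the $1\times 2k$ Möbius strip, $\mathrm{red}$ gives the coloring of the $2\times k$ grid whose column $j$ has top square colored as square $j$ and bottom square colored as square $2k+1-j$. *)

theory Defs
  imports Main
begin

text \<open>A coloring is represented by its set of water squares (all other squares are land).\<close>

definition connected_in :: "('a \<Rightarrow> 'a \<Rightarrow> bool) \<Rightarrow> 'a set \<Rightarrow> bool" where
  "connected_in adj S \<longleftrightarrow>
     (\<forall>x\<in>S. \<forall>y\<in>S. (\<lambda>a b. a \<in> S \<and> b \<in> S \<and> adj a b)\<^sup>*\<^sup>* x y)"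

text \<open>Squares are 1..n; square j = [j-1,j] x [0,1]. The identification (x,1) ~ (n-x,0)
  glues the top edge of square j to the bottom edge of square n+1-j; the vertical sides
  are not identified.  Two distinct squares are adjacent iff they share a vertical edge
  (|i-j| = 1) or a glued horizontal edge (i + j = n + 1).\<close>
definition mob_adj :: "nat \<Rightarrow> nat \<Rightarrow> nat \<Rightarrow> bool" where
  "mob_adj n i j \<longleftrightarrow> i \<in> {1..n} \<and> j \<in> {1..n} \<and> i \<noteq> j \<and>
     (i + 1 = j \<or> j + 1 = i \<or> i + j = n + 1)"

text \<open>Squares incident to the point with x-coordinate x on a horizontal side of the strip.\<close>
definition mob_sq_at :: "nat \<Rightarrow> nat \<Rightarrow> nat set" where
  "mob_sq_at n x = {j \<in> {1..n}. j - 1 \<le> x \<and> x \<le> j}"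

text \<open>Vertices of the tiling: the class of (i,1) ~ (n-i,0), for i in 0..n.  It lies on the
  boundary (image of the vertical sides) iff i = 0 or i = n; so interior vertices are
  i = 1..n-1.  The squares incident to it are those incident to (i,1) or to (n-i,0).\<close>
definition mob_vertex_squares :: "nat \<Rightarrow> nat \<Rightarrow> nat set" where
  "mob_vertex_squares n i = mob_sq_at n i \<union> mob_sq_at n (n - i)"

definition M_circ :: "nat \<Rightarrow> nat set set" where
  "M_circ n = {W. W \<subseteq> {1..n} \<and> connected_in (mob_adj n) W \<and>
      (\<forall>i\<in>{1..n-1}. \<not> mob_vertex_squares n i \<subseteq> W)}"

text \<open>Cells (r,c) with row r in {1,2} (1 = top, 2 = bottom) and column c in 1..k.\<close>
definition grid :: "nat \<Rightarrow> (nat \<times> nat) set" where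
  "grid k = {1,2} \<times> {1..k}"

definition grid_adj :: "nat \<Rightarrow> nat \<times> nat \<Rightarrow> nat \<times> nat \<Rightarrow> bool" where
  "grid_adj k p q \<longleftrightarrow> p \<in> grid k \<and> q \<in> grid k \<and>
     ((fst p = fst q \<and> (snd p + 1 = snd q \<or> snd q + 1 = snd p)) \<or>
      (snd p = snd q \<and> fst p \<noteq> fst q))"

definition N_set :: "nat \<Rightarrow> (nat \<times> nat) set set" where
  "N_set k = {W. W \<subseteq> grid k \<and> connected_in (grid_adj k) W \<and>
      (\<forall>c\<in>{1..<k}. \<not> {(1,c),(2,c),(1,c+1),(2,c+1)} \<subseteq> W)}"

definition N_set_i :: "nat \<Rightarrow> nat \<Rightarrow> (nat \<times> nat) set set" where
  "N_set_i k i = {W \<in> N_set k. card {r \<in> {1,2}. (r, k) \<in> W} = i}"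

definition R_land :: "(nat \<times> nat) set" where
  "R_land = {}"

definition contr :: "nat \<Rightarrow> nat set \<Rightarrow> nat set" where
  "contr k W = {j \<in> W. j \<le> k} \<union> {j - 1 | j. j \<in> W \<and> k + 2 \<le> j}"

definition red :: "nat \<Rightarrow> nat set \<Rightarrow> (nat \<times> nat) set" where
  "red k W = {(1, j) | j. j \<in> {1..k} \<and> j \<in> W} \<union>
             {(2, j) | j. j \<in> {1..k} \<and> 2 * k + 1 - j \<in> W}"

end

theory Submission
  imports Defs
begin

lemma rtp_map:
  assumes "R\<^sup>*\<^sup>* x y" "\<And>u v. R u v \<Longrightarrow> Q\<^sup>*\<^sup>* (f u) (f v)"
  shows "Q\<^sup>*\<^sup>* (f x) (f y)"
  using assms(1)
proof (induction rule: rtranclp_induct)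
  case base then show ?case by simp
next
  case (step y z) then show ?case using assms(2) by (meson rtranclp_trans)
qed

lemma conn_map:
  assumes "connected_in R S" "\<And>x y. x \<in> S \<Longrightarrow> y \<in> S \<Longrightarrow> R x y \<Longrightarrow> Q (f x) (f y)"
  shows "connected_in Q (f ` S)"
  unfolding connected_in_def
proof (intro ballI)
  fix a b assume "a \<in> f ` S" "b \<in> f ` S"
  then obtain x y where xy: "x \<in> S" "y \<in> S" "a = f x" "b = f y" by blast
  have "(\<lambda>a b. a \<in> S \<and> b \<in> S \<and> R a b)\<^sup>*\<^sup>* x y" using assms(1) xy unfolding connected_in_def by blast
  then have "(\<lambda>a b. a \<in> f ` S \<and> b \<in> f ` S \<and> Q a b)\<^sup>*\<^sup>* (f x) (f y)"
    by (rule rtp_map) (use assms(2) in blast)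
  then show "(\<lambda>a b. a \<in> f ` S \<and> b \<in> f ` S \<and> Q a b)\<^sup>*\<^sup>* a b" using xy by simp
qed

lemma conn_split:
  assumes "connected_in R (A \<union> B)" "a \<in> A"
    and "\<And>x y. x \<in> A \<Longrightarrow> y \<in> B \<Longrightarrow> y \<notin> A \<Longrightarrow> R x y \<or> R y x \<Longrightarrow> x = a"
  shows "connected_in R A"
  unfolding connected_in_def
proof (intro ballI)
  fix x y assume xy: "x \<in> A" "y \<in> A"
  define p where "p z = (if z \<in> A then z else a)" for z
  have "(\<lambda>u v. u \<in> A \<union> B \<and> v \<in> A \<union> B \<and> R u v)\<^sup>*\<^sup>* x y" using assms(1) xy unfolding connected_in_def by blast
  then have "(\<lambda>u v. u \<in> A \<and> v \<in> A \<and> R u v)\<^sup>*\<^sup>* (p x) (p y)"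
  proof (rule rtp_map)
    fix u v assume uv: "u \<in> A \<union> B \<and> v \<in> A \<union> B \<and> R u v"
    show "(\<lambda>u v. u \<in> A \<and> v \<in> A \<and> R u v)\<^sup>*\<^sup>* (p u) (p v)"
    proof (cases "u \<in> A \<and> v \<in> A")
      case True then show ?thesis using uv by (auto simp: p_def intro: r_into_rtranclp[where r="\<lambda>u v. u \<in> A \<and> v \<in> A \<and> R u v"])
    next
      case False
      then have "p u = p v" using uv assms(3)[of u v] assms(3)[of v u] by (auto simp: p_def)
      then show ?thesis by simp
    qed
  qed
  then show "(\<lambda>u v. u \<in> A \<and> v \<in> A \<and> R u v)\<^sup>*\<^sup>* x y" using xy by (simp add: p_def)
qed

lemma conn_join:
  assumes "connected_in R A" "connected_in R B" "a \<in> A" "b \<in> B" "R a b" "R b a"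
  shows "connected_in R (A \<union> B)"
  unfolding connected_in_def
proof (intro ballI)
  let ?U = "\<lambda>u v. u \<in> A \<union> B \<and> v \<in> A \<union> B \<and> R u v"
  have mA: "(\<lambda>u v. u \<in> A \<and> v \<in> A \<and> R u v)\<^sup>*\<^sup>* \<le> ?U\<^sup>*\<^sup>*" by (rule rtranclp_mono) auto
  have mB: "(\<lambda>u v. u \<in> B \<and> v \<in> B \<and> R u v)\<^sup>*\<^sup>* \<le> ?U\<^sup>*\<^sup>*" by (rule rtranclp_mono) auto
  have iA: "?U\<^sup>*\<^sup>* x y" if "x \<in> A" "y \<in> A" for x y
    using mA assms(1) that unfolding connected_in_def by blast
  have iB: "?U\<^sup>*\<^sup>* x y" if "x \<in> B" "y \<in> B" for x y
    using mB assms(2) that unfolding connected_in_def by blast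
  have ab: "?U\<^sup>*\<^sup>* a b" "?U\<^sup>*\<^sup>* b a" using assms(3-6) by auto
  fix x y assume "x \<in> A \<union> B" "y \<in> A \<union> B"
  then show "?U\<^sup>*\<^sup>* x y"
    using iA iB ab assms(3,4) by (meson UnE rtranclp_trans)
qed

lemma conn_empty: "connected_in R {}" by (simp add: connected_in_def)
lemma conn_single: "connected_in R {x}" by (simp add: connected_in_def)



definition g :: "nat \<Rightarrow> nat \<Rightarrow> nat \<times> nat" where
  "g k j = (if j \<le> k then (1, j) else (2, 2*k+2-j))"
definition h :: "nat \<Rightarrow> nat \<times> nat \<Rightarrow> nat" where
  "h k p = (if fst p = 1 then snd p else 2*k+2 - snd p)"

lemma mem_contr: "j \<in> contr k W \<longleftrightarrow> (j \<le> k \<and> j \<in> W) \<or> (k+1 \<le> j \<and> j+1 \<in> W)"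
proof
  assume "j \<in> contr k W" then show "(j \<le> k \<and> j \<in> W) \<or> (k+1 \<le> j \<and> j+1 \<in> W)"
    unfolding contr_def by auto
next
  assume "(j \<le> k \<and> j \<in> W) \<or> (k+1 \<le> j \<and> j+1 \<in> W)"
  then show "j \<in> contr k W"
  proof
    assume "j \<le> k \<and> j \<in> W" then show ?thesis unfolding contr_def by auto
  next
    assume a: "k+1 \<le> j \<and> j+1 \<in> W"
    then have "j = (j+1) - 1 \<and> j+1 \<in> W \<and> k+2 \<le> j+1" by auto
    then show ?thesis unfolding contr_def by blast
  qed
qed

lemma mem_red: "(r, c) \<in> red k X \<longleftrightarrow> c \<in> {1..k} \<and> ((r = 1 \<and> c \<in> X) \<or> (r = 2 \<and> 2*k+1-c \<in> X))"
  unfolding red_def by auto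

lemma mem_rc: "(r, c) \<in> red k (contr k W) \<longleftrightarrow>
   c \<in> {1..k} \<and> ((r = 1 \<and> c \<in> W) \<or> (r = 2 \<and> 2*k+2-c \<in> W))"
proof -
  have "c \<in> {1..k} \<Longrightarrow> 2*k+1-c \<in> contr k W \<longleftrightarrow> 2*k+2-c \<in> W"
  proof -
    assume c: "c \<in> {1..k}"
    then have "\<not> 2*k+1-c \<le> k" "k+1 \<le> 2*k+1-c" "2*k+1-c+1 = 2*k+2-c" by auto
    then show ?thesis unfolding mem_contr by auto
  qed
  then show ?thesis unfolding mem_red mem_contr by auto
qed

lemma mem_gimg:
  assumes "W \<subseteq> {1..2*k+1}"
  shows "(r, c) \<in> g k ` (W - {k+1}) \<longleftrightarrow>
   c \<in> {1..k} \<and> ((r = 1 \<and> c \<in> W) \<or> (r = 2 \<and> 2*k+2-c \<in> W))"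
proof
  assume "(r, c) \<in> g k ` (W - {k+1})"
  then obtain j where j: "j \<in> W" "j \<noteq> k+1" "(r, c) = g k j" by blast
  with assms have j1: "1 \<le> j" "j \<le> 2*k+1" by auto
  show "c \<in> {1..k} \<and> ((r = 1 \<and> c \<in> W) \<or> (r = 2 \<and> 2*k+2-c \<in> W))"
  proof (cases "j \<le> k")
    case True then show ?thesis using j j1 by (auto simp: g_def)
  next
    case False
    then have "r = 2" "c = 2*k+2-j" using j by (auto simp: g_def)
    moreover have "2*k+2-(2*k+2-j) = j" using j1 by auto
    ultimately show ?thesis using j j1 False by auto
  qed
next
  assume a: "c \<in> {1..k} \<and> ((r = 1 \<and> c \<in> W) \<or> (r = 2 \<and> 2*k+2-c \<in> W))"
  then consider "c \<in> {1..k}" "r = 1" "c \<in> W" | "c \<in> {1..k}" "r = 2" "2*k+2-c \<in> W" by blast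
  then show "(r, c) \<in> g k ` (W - {k+1})"
  proof cases
    case 1 then show ?thesis by (auto simp: g_def intro!: image_eqI[where x=c])
  next
    case 2
    then have "g k (2*k+2-c) = (r, c)" "2*k+2-c \<noteq> k+1" by (auto simp: g_def)
    then show ?thesis using 2 by (metis DiffI image_eqI singletonD)
  qed
qed

lemma red_contr:
  assumes "W \<subseteq> {1..2*k+1}"
  shows "red k (contr k W) = g k ` (W - {k+1})"
  by (rule set_eqI) (metis surj_pair mem_rc mem_gimg[OF assms])



lemma g_grid: "j \<in> {1..2*k+1} - {k+1} \<Longrightarrow> g k j \<in> grid k"
  by (auto simp: g_def grid_def)
lemma hg: "j \<in> {1..2*k+1} - {k+1} \<Longrightarrow> h k (g k j) = j"
  by (auto simp: g_def h_def)
lemma h_T: "p \<in> grid k \<Longrightarrow> h k p \<in> {1..2*k+1} - {k+1}"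
  by (auto simp: h_def grid_def)
lemma gh: "p \<in> grid k \<Longrightarrow> g k (h k p) = p"
  by (auto simp: h_def grid_def g_def)

lemma adj_g:
  assumes i: "i \<in> {1..2*k+1} - {k+1}" and j: "j \<in> {1..2*k+1} - {k+1}"
  shows "mob_adj (2*k+1) i j \<longleftrightarrow> grid_adj k (g k i) (g k j)"
proof -
  have gi: "g k i \<in> grid k" "g k j \<in> grid k" using i j by (auto intro: g_grid)
  show ?thesis
  proof (cases "i \<le> k")
    case True note ii = this
    show ?thesis
    proof (cases "j \<le> k")
      case True then show ?thesis using ii i j gi unfolding mob_adj_def grid_adj_def g_def by auto
    next
      case False then show ?thesis using ii i j gi unfolding mob_adj_def grid_adj_def g_def by auto
    qed
  next
    case False note ii = this
    show ?thesis
    proof (cases "j \<le> k")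
      case True then show ?thesis using ii i j gi unfolding mob_adj_def grid_adj_def g_def by auto
    next
      case False then show ?thesis using ii i j gi unfolding mob_adj_def grid_adj_def g_def by auto
    qed
  qed
qed

lemma adj_h:
  assumes "p \<in> grid k" "q \<in> grid k" "grid_adj k p q"
  shows "mob_adj (2*k+1) (h k p) (h k q)"
  using adj_g[OF h_T[OF assms(1)] h_T[OF assms(2)]] assms by (simp add: gh)

lemma adj_c: "mob_adj (2*k+1) (k+1) y \<longleftrightarrow> 1 \<le> k \<and> (y = k \<or> y = k+2)"
  unfolding mob_adj_def by auto
lemma adj_c': "mob_adj (2*k+1) y (k+1) \<longleftrightarrow> 1 \<le> k \<and> (y = k \<or> y = k+2)"
  unfolding mob_adj_def by auto

lemma vtx:
  assumes "1 \<le> i" "i \<le> n - 1"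
  shows "mob_vertex_squares n i = {i, i+1, n-i, n+1-i}"
proof -
  have "mob_sq_at n x = {x, x+1}" if "1 \<le> x" "x \<le> n - 1" for x
    using that unfolding mob_sq_at_def by auto
  then show ?thesis using assms unfolding mob_vertex_squares_def
    by (auto simp: Suc_diff_le)
qed

definition blk :: "nat \<Rightarrow> (nat \<times> nat) set \<Rightarrow> bool" where
  "blk k V \<longleftrightarrow> (\<forall>c\<in>{1..<k}. \<not> {(1,c),(2,c),(1,c+1),(2,c+1)} \<subseteq> V)"

lemma blk_empty[simp]: "blk k {}" by (simp add: blk_def)

lemma N_set_blk: "N_set k = {V. V \<subseteq> grid k \<and> connected_in (grid_adj k) V \<and> blk k V}"
  unfolding N_set_def blk_def by (rule refl)

lemma vb:
  assumes k: "1 \<le> k" and W: "W \<subseteq> {1..2*k+1}"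
  shows "(\<forall>i\<in>{1..2*k+1-1}. \<not> mob_vertex_squares (2*k+1) i \<subseteq> W) \<longleftrightarrow>
    (blk k (g k ` (W - {k+1})) \<and> \<not> (k \<in> W \<and> k+1 \<in> W \<and> k+2 \<in> W))"
proof -
  define P where "P i \<longleftrightarrow> (i \<in> W \<and> i+1 \<in> W \<and> 2*k+1-i \<in> W \<and> 2*k+2-i \<in> W)" for i
  have L: "(\<forall>i\<in>{1..2*k+1-1}. \<not> mob_vertex_squares (2*k+1) i \<subseteq> W) \<longleftrightarrow> (\<forall>i\<in>{1..2*k}. \<not> P i)"
  proof -
    have "mob_vertex_squares (2*k+1) i \<subseteq> W \<longleftrightarrow> P i" if "i \<in> {1..2*k}" for i
      using that vtx[of i "2*k+1"] unfolding P_def by auto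
    then show ?thesis by auto
  qed
  have B: "{(1,c),(2,c),(1,c+1),(2,c+1)} \<subseteq> g k ` (W - {k+1}) \<longleftrightarrow> P c" if "c \<in> {1..<k}" for c
  proof -
    have e: "2*k+2-(c+1) = 2*k+1-c" by auto
    have m: "(1,c) \<in> g k ` (W - {k+1}) \<longleftrightarrow> c \<in> W"
         "(2,c) \<in> g k ` (W - {k+1}) \<longleftrightarrow> 2*k+2-c \<in> W"
         "(1,c+1) \<in> g k ` (W - {k+1}) \<longleftrightarrow> c+1 \<in> W"
         "(2,c+1) \<in> g k ` (W - {k+1}) \<longleftrightarrow> 2*k+1-c \<in> W"
      using that e unfolding mem_gimg[OF W] by auto
    show ?thesis unfolding P_def insert_subset m by auto
  qed
  have S: "P i \<longleftrightarrow> P (2*k+1-i)" if "i \<in> {1..2*k}" for i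
  proof -
    have "2*k+1-(2*k+1-i) = i" "2*k+2-(2*k+1-i) = i+1" "2*k+1-i+1 = 2*k+2-i" using that by auto
    then show ?thesis unfolding P_def by auto
  qed
  have Pk: "P k \<longleftrightarrow> (k \<in> W \<and> k+1 \<in> W \<and> k+2 \<in> W)"
  proof -
    have "2*k+1-k = k+1" "2*k+2-k = k+2" by auto
    then show ?thesis unfolding P_def by auto
  qed
  have "(\<forall>i\<in>{1..2*k}. \<not> P i) \<longleftrightarrow> (\<forall>c\<in>{1..<k}. \<not> P c) \<and> \<not> P k"
  proof safe
    fix i assume A: "\<forall>c\<in>{1..<k}. \<not> P c" "\<not> P k" and i: "i \<in> {1..2*k}" and Pi: "P i"
    consider "i < k" | "i = k" | "i = k+1" | "k+2 \<le> i" by linarith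
    then show False
    proof cases
      case 1 then show ?thesis using A i Pi by auto
    next
      case 2 then show ?thesis using A Pi by auto
    next
      case 3 then have "2*k+1-i = k" by auto
      then show ?thesis using S[OF i] A Pi by auto
    next
      case 4 then have "2*k+1-i \<in> {1..<k}" using i by auto
      then show ?thesis using S[OF i] A Pi by auto
    qed
  qed (use k in auto)
  then show ?thesis unfolding blk_def using L B Pk by auto
qed



lemma path_exit:
  assumes "(\<lambda>a b. a \<in> S \<and> b \<in> S \<and> R a b)\<^sup>*\<^sup>* x y" "x \<in> B" "y \<notin> B"
  shows "\<exists>u v. u \<in> B \<and> u \<in> S \<and> v \<in> S \<and> v \<notin> B \<and> R u v"
  using assms
proof (induction rule: rtranclp_induct)
  case base then show ?case by simp
next
  case (step y z) then show ?case by (cases "y \<in> B") auto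
qed

lemma card12: "card {r \<in> {1,2::nat}. P r} = 1 \<longleftrightarrow> (P 1 \<noteq> P 2)"
  "card {r \<in> {1,2::nat}. P r} = 2 \<longleftrightarrow> (P 1 \<and> P 2)"
proof -
  have e: "{r \<in> {1,2::nat}. P r} = (if P 1 then {1} else {}) \<union> (if P 2 then {2} else {})" by auto
  show "card {r \<in> {1,2::nat}. P r} = 1 \<longleftrightarrow> (P 1 \<noteq> P 2)" unfolding e by auto
  show "card {r \<in> {1,2::nat}. P r} = 2 \<longleftrightarrow> (P 1 \<and> P 2)" unfolding e by auto
qed

lemma hgW: "W \<subseteq> {1..2*k+1} \<Longrightarrow> h k ` (g k ` (W - {k+1})) = W - {k+1}"
proof -
  assume "W \<subseteq> {1..2*k+1}"
  then have "\<forall>j\<in>W - {k+1}. h k (g k j) = j" using hg by blast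
  then show ?thesis by (simp add: image_image)
qed

lemma ghV: "V \<subseteq> grid k \<Longrightarrow> g k ` (h k ` V) = V"
proof -
  assume "V \<subseteq> grid k"
  then have "\<forall>p\<in>V. g k (h k p) = p" using gh by blast
  then show ?thesis by (simp add: image_image)
qed

lemma A_fwd:
  assumes k: "1 \<le> k" and W: "W \<in> M_circ (2*k+1)" "k+1 \<notin> W"
  shows "g k ` (W - {k+1}) \<in> N_set k"
proof -
  have Ws: "W \<subseteq> {1..2*k+1}" and Wc: "connected_in (mob_adj (2*k+1)) W"
    and Wv: "\<forall>i\<in>{1..2*k+1-1}. \<not> mob_vertex_squares (2*k+1) i \<subseteq> W"
    using W unfolding M_circ_def by auto
  have e: "W - {k+1} = W" using W by auto
  have T: "W \<subseteq> {1..2*k+1} - {k+1}" using Ws W by auto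
  have "g k ` (W - {k+1}) \<subseteq> grid k" unfolding e using T g_grid by blast
  moreover have "connected_in (grid_adj k) (g k ` W)"
    by (rule conn_map[OF Wc]) (use adj_g T in blast)
  then have "connected_in (grid_adj k) (g k ` (W - {k+1}))" unfolding e .
  moreover have "blk k (g k ` (W - {k+1}))"
    using conjunct1[OF iffD1[OF vb[OF k Ws] Wv]] .
  ultimately show ?thesis unfolding N_set_blk mem_Collect_eq by blast
qed

lemma A_bwd:
  assumes k: "1 \<le> k" and V: "V \<in> N_set k"
  shows "h k ` V \<in> M_circ (2*k+1) \<and> k+1 \<notin> h k ` V \<and> g k ` (h k ` V - {k+1}) = V"
proof -
  have Vs: "V \<subseteq> grid k" and Vc: "connected_in (grid_adj k) V"
    and Vb: "blk k V"
    using V unfolding N_set_blk by auto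
  have T: "h k ` V \<subseteq> {1..2*k+1} - {k+1}" using Vs by (intro image_subsetI h_T) blast
  then have e: "h k ` V - {k+1} = h k ` V" by auto
  have gv: "g k ` (h k ` V - {k+1}) = V" unfolding e using ghV[OF Vs] .
  have Ws: "h k ` V \<subseteq> {1..2*k+1}" using T by auto
  have "connected_in (mob_adj (2*k+1)) (h k ` V)"
    by (rule conn_map[OF Vc]) (use adj_h Vs in blast)
  moreover have "\<forall>i\<in>{1..2*k+1-1}. \<not> mob_vertex_squares (2*k+1) i \<subseteq> h k ` V"
  proof (rule iffD2[OF vb[OF k Ws]])
    have "k+1 \<notin> h k ` V" using T by blast
    then show "blk k (g k ` (h k ` V - {k+1})) \<and> \<not> (k \<in> h k ` V \<and> k+1 \<in> h k ` V \<and> k+2 \<in> h k ` V)" unfolding gv using Vb by blast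
  qed
  ultimately show ?thesis using Ws T gv unfolding M_circ_def by auto
qed



lemma colk:
  assumes k: "1 \<le> k" and W: "W \<subseteq> {1..2*k+1}"
  shows "(1,k) \<in> g k ` (W - {k+1}) \<longleftrightarrow> k \<in> W" "(2,k) \<in> g k ` (W - {k+1}) \<longleftrightarrow> k+2 \<in> W"
proof -
  have "2*k+2-k = k+2" by auto
  then show "(1,k) \<in> g k ` (W - {k+1}) \<longleftrightarrow> k \<in> W" "(2,k) \<in> g k ` (W - {k+1}) \<longleftrightarrow> k+2 \<in> W"
    unfolding mem_gimg[OF W] using k by auto
qed

lemma B_fwd:
  assumes k: "1 \<le> k" and W: "W \<in> M_circ (2*k+1)" "k+1 \<in> W"
  shows "g k ` (W - {k+1}) \<in> N_set_i k 1 \<union> {R_land}"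
proof (cases "W - {k+1} = {}")
  case True then show ?thesis by (simp add: R_land_def)
next
  case False
  have Ws: "W \<subseteq> {1..2*k+1}" and Wc: "connected_in (mob_adj (2*k+1)) W"
    and Wv: "\<forall>i\<in>{1..2*k+1-1}. \<not> mob_vertex_squares (2*k+1) i \<subseteq> W"
    using W(1) unfolding M_circ_def by auto
  have V1: "blk k (g k ` (W - {k+1}))"
    and nb: "\<not> (k \<in> W \<and> k+2 \<in> W)"
    using iffD1[OF vb[OF k Ws] Wv] W(2) by blast+
  obtain x where x: "x \<in> W" "x \<noteq> k+1" using False by blast
  have "(\<lambda>a b. a \<in> W \<and> b \<in> W \<and> mob_adj (2*k+1) a b)\<^sup>*\<^sup>* (k+1) x"
    using Wc W(2) x unfolding connected_in_def by blast
  from path_exit[OF this, of "{k+1}"] x obtain v where v: "v \<in> W" "v \<noteq> k+1" "mob_adj (2*k+1) (k+1) v"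
    by auto
  then have va: "v = k \<or> v = k+2" using adj_c by blast
  define W' where "W' = W - {k+1}"
  have T: "W' \<subseteq> {1..2*k+1} - {k+1}" using Ws unfolding W'_def by auto
  have "connected_in (mob_adj (2*k+1)) W'"
  proof (rule conn_split[where B="{k+1}" and a=v])
    show "connected_in (mob_adj (2*k+1)) (W' \<union> {k+1})" using Wc W(2) unfolding W'_def
      by (metis Un_insert_right insert_Diff sup_bot.right_neutral)
    show "v \<in> W'" using v unfolding W'_def by auto
    fix x y assume "x \<in> W'" "y \<in> {k+1}" "y \<notin> W'" "mob_adj (2*k+1) x y \<or> mob_adj (2*k+1) y x"
    then show "x = v" using adj_c adj_c' va nb v(1) unfolding W'_def by auto
  qed
  then have "connected_in (grid_adj k) (g k ` W')"
    by (rule conn_map) (use adj_g T in blast)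
  moreover have "g k ` W' \<subseteq> grid k" using T g_grid by blast
  moreover have "card {r \<in> {1,2}. (r, k) \<in> g k ` W'} = 1"
    unfolding card12 W'_def colk[OF k Ws] using nb va v by auto
  ultimately show ?thesis using V1 unfolding W'_def N_set_i_def N_set_blk by auto
qed

lemma B_bwd:
  assumes k: "1 \<le> k" and V: "V \<in> N_set_i k 1 \<union> {R_land}"
  shows "insert (k+1) (h k ` V) \<in> M_circ (2*k+1) \<and> g k ` (insert (k+1) (h k ` V) - {k+1}) = V"
proof -
  have Vs: "V \<subseteq> grid k" and Vc: "connected_in (grid_adj k) V"
    and Vb: "blk k V"
    and Vk: "V = {} \<or> card {r \<in> {1,2}. (r, k) \<in> V} = 1"
    using V unfolding N_set_i_def N_set_blk R_land_def by (auto simp: conn_empty)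
  define W where "W = insert (k+1) (h k ` V)"
  have T: "h k ` V \<subseteq> {1..2*k+1} - {k+1}" using Vs by (intro image_subsetI h_T) blast
  then have e: "W - {k+1} = h k ` V" unfolding W_def by auto
  have gv: "g k ` (W - {k+1}) = V" unfolding e using ghV[OF Vs] .
  have Ws: "W \<subseteq> {1..2*k+1}" using T unfolding W_def by auto
  have nb: "\<not> (k \<in> W \<and> k+2 \<in> W)"
    using Vk colk[OF k Ws] unfolding gv card12 by auto
  have hc: "connected_in (mob_adj (2*k+1)) (h k ` V)"
    by (rule conn_map[OF Vc]) (use adj_h Vs in blast)
  have "connected_in (mob_adj (2*k+1)) W"
  proof (cases "V = {}")
    case True then show ?thesis unfolding W_def by (simp add: conn_single)
  next
    case False
    then have "k \<in> W \<or> k+2 \<in> W" using Vk colk[OF k Ws] unfolding gv card12 by auto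
    moreover have "k \<in> W - {k+1} \<longleftrightarrow> k \<in> W" "k+2 \<in> W - {k+1} \<longleftrightarrow> k+2 \<in> W" by auto
    ultimately obtain a where a: "a \<in> h k ` V" "a = k \<or> a = k+2" unfolding e by blast
    have "connected_in (mob_adj (2*k+1)) (h k ` V \<union> {k+1})"
      by (rule conn_join[OF hc conn_single a(1)]) (use a(2) k in \<open>auto simp: mob_adj_def\<close>)
    then show ?thesis unfolding W_def by simp
  qed
  moreover have "\<forall>i\<in>{1..2*k+1-1}. \<not> mob_vertex_squares (2*k+1) i \<subseteq> W"
  proof (rule iffD2[OF vb[OF k Ws]])
    show "blk k (g k ` (W - {k+1})) \<and> \<not> (k \<in> W \<and> k+1 \<in> W \<and> k+2 \<in> W)" unfolding gv using Vb nb by blast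
  qed
  ultimately show ?thesis using Ws gv unfolding M_circ_def W_def by auto
qed



lemma grid_Suc: "grid (k+1) = grid k \<union> {(1,k+1),(2,k+1)}"
  unfolding grid_def by auto

lemma adj_ext: "p \<in> grid k \<Longrightarrow> q \<in> grid k \<Longrightarrow> grid_adj (k+1) p q \<longleftrightarrow> grid_adj k p q"
  unfolding grid_adj_def grid_Suc by auto

lemma conn_ext: "U \<subseteq> grid k \<Longrightarrow> connected_in (grid_adj k) U \<longleftrightarrow> connected_in (grid_adj (k+1)) U"
  using conn_map[where f=id and S=U and R="grid_adj k" and Q="grid_adj (k+1)"]
        conn_map[where f=id and S=U and Q="grid_adj k" and R="grid_adj (k+1)"] adj_ext
  by (metis id_apply image_id subsetD)

lemma adj_col:
  assumes "u \<in> {(1,k+1),(2,k+1)}" "v \<in> grid k" "grid_adj (k+1) u v \<or> grid_adj (k+1) v u"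
  shows "v = (1,k) \<or> v = (2,k)"
proof -
  obtain r c where v: "v = (r,c)" by force
  have r: "r = 1 \<or> r = 2" and c: "c \<le> k" using assms(2) v unfolding grid_def by auto
  have "snd u = k+1" using assms(1) by auto
  then have "c = k" using assms(3) c v unfolding grid_adj_def by auto
  then show ?thesis using r v by auto
qed

lemma C_fwd:
  assumes V: "V \<in> N_set_i (k+1) 2"
  shows "V - {(1,k+1),(2,k+1)} \<in> N_set_i k 1 \<union> {R_land}"
proof -
  let ?C = "{(1::nat,k+1),(2::nat,k+1)}"
  have Vs: "V \<subseteq> grid (k+1)" and Vc: "connected_in (grid_adj (k+1)) V"
    and Vb: "blk (k+1) V"
    and Vk: "card {r \<in> {1,2}. (r, k+1) \<in> V} = 2"
    using V unfolding N_set_i_def N_set_blk by auto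
  have C: "?C \<subseteq> V" using Vk unfolding card12 by auto
  define U where "U = V - ?C"
  have Us: "U \<subseteq> grid k" using Vs unfolding U_def grid_Suc by auto
  show ?thesis
  proof (cases "U = {}")
    case True then show ?thesis by (simp add: R_land_def U_def)
  next
    case False
    then have k: "1 \<le> k" using Us unfolding grid_def by auto
    have nb: "\<not> ((1,k) \<in> U \<and> (2,k) \<in> U)"
    proof
      assume a: "(1,k) \<in> U \<and> (2,k) \<in> U"
      have "k \<in> {1..<k+1}" using k by auto
      from Vb[unfolded blk_def, rule_format, OF this] have "\<not> {(1,k),(2,k),(1,k+1),(2,k+1)} \<subseteq> V" .
      moreover have "{(1,k),(2,k),(1,k+1),(2,k+1)} \<subseteq> V" using a C unfolding U_def by simp
      ultimately show False by blast
    qed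
    obtain x where x: "x \<in> U" using False by blast
    have "(\<lambda>a b. a \<in> V \<and> b \<in> V \<and> grid_adj (k+1) a b)\<^sup>*\<^sup>* (1,k+1) x"
      using Vc C x unfolding connected_in_def U_def by blast
    from path_exit[OF this, of ?C] x obtain u v where
      uv: "u \<in> ?C" "v \<in> V" "v \<notin> ?C" "grid_adj (k+1) u v" unfolding U_def by auto
    then have vU: "v \<in> U" unfolding U_def by auto
    then have "v \<in> grid k" using Us by auto
    then have va: "v = (1,k) \<or> v = (2,k)" using uv(1,4) adj_col by blast
    have "connected_in (grid_adj (k+1)) U"
    proof (rule conn_split[where B="?C" and a=v])
      show "connected_in (grid_adj (k+1)) (U \<union> ?C)" using Vc C unfolding U_def
        by (metis Un_Diff_cancel2 sup.absorb1)
      show "v \<in> U" by fact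
      fix x y assume xy: "x \<in> U" "y \<in> ?C" "y \<notin> U" "grid_adj (k+1) x y \<or> grid_adj (k+1) y x"
      then have "x \<in> grid k" using Us by auto
      then have "x = (1,k) \<or> x = (2,k)" using xy(2,4) adj_col by blast
      then show "x = v" using va nb xy(1) vU by auto
    qed
    then have "connected_in (grid_adj k) U" using conn_ext[OF Us] by simp
    moreover have "card {r \<in> {1,2}. (r, k) \<in> U} = 1"
      unfolding card12 using nb va vU by auto
    moreover have "blk k U"
      unfolding blk_def
    proof (intro ballI notI)
      fix c assume c: "c \<in> {1..<k}" and sU: "{(1,c),(2,c),(1,c+1),(2,c+1)} \<subseteq> U"
      have "c \<in> {1..<k+1}" using c by auto
      from Vb[unfolded blk_def, rule_format, OF this] have "\<not> {(1,c),(2,c),(1,c+1),(2,c+1)} \<subseteq> V" .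
      moreover have "{(1,c),(2,c),(1,c+1),(2,c+1)} \<subseteq> V" using sU unfolding U_def by blast
      ultimately show False by blast
    qed
    ultimately show ?thesis using Us unfolding U_def N_set_i_def N_set_blk by auto
  qed
qed

lemma C_bwd:
  assumes U: "U \<in> N_set_i k 1 \<union> {R_land}"
  shows "U \<union> {(1,k+1),(2,k+1)} \<in> N_set_i (k+1) 2 \<and> (U \<union> {(1,k+1),(2,k+1)}) - {(1,k+1),(2,k+1)} = U"
proof -
  let ?C = "{(1::nat,k+1),(2::nat,k+1)}"
  have Us: "U \<subseteq> grid k" and Uc: "connected_in (grid_adj k) U"
    and Ub: "blk k U"
    and Uk: "U = {} \<or> card {r \<in> {1,2}. (r, k) \<in> U} = 1"
    using U unfolding N_set_i_def N_set_blk R_land_def by (auto simp: conn_empty)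
  have UC: "U \<inter> ?C = {}" using Us unfolding grid_def by auto
  have nb: "\<not> ((1,k) \<in> U \<and> (2,k) \<in> U)" using Uk unfolding card12 by auto
  have Cc: "connected_in (grid_adj (k+1)) ?C"
  proof -
    have "connected_in (grid_adj (k+1)) ({(1,k+1)} \<union> {(2,k+1)})"
      by (rule conn_join[OF conn_single conn_single]) (auto simp: grid_adj_def grid_def)
    moreover have "{(1::nat,k+1)} \<union> {(2::nat,k+1)} = ?C" by auto
    ultimately show ?thesis by simp
  qed
  have "connected_in (grid_adj (k+1)) (U \<union> ?C)"
  proof (cases "U = {}")
    case True then show ?thesis using Cc by simp
  next
    case False
    then obtain r where r: "r \<in> {1,2}" "(r,k) \<in> U" using Uk unfolding card12 by auto
    have "connected_in (grid_adj (k+1)) U" using Uc conn_ext[OF Us] by simp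
    then show ?thesis
      by (rule conn_join[OF _ Cc r(2), of "(r,k+1)"]) (use r Us in \<open>auto simp: grid_adj_def grid_def\<close>)
  qed
  moreover have "U \<union> ?C \<subseteq> grid (k+1)" using Us unfolding grid_Suc by auto
  moreover have "blk (k+1) (U \<union> ?C)"
    unfolding blk_def
  proof
    fix c assume c: "c \<in> {1..<k+1}"
    show "\<not> {(1,c),(2,c),(1,c+1),(2,c+1)} \<subseteq> U \<union> ?C"
    proof (cases "c < k")
      case True
      show ?thesis
      proof
        assume "{(1,c),(2,c),(1,c+1),(2,c+1)} \<subseteq> U \<union> ?C"
        then have "{(1,c),(2,c),(1,c+1),(2,c+1)} \<subseteq> U" using True by simp
        moreover have "c \<in> {1..<k}" using True c by auto
        ultimately show False using Ub[unfolded blk_def] by blast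
      qed
    next
      case False then have "c = k" using c by auto
      then show ?thesis using nb by auto
    qed
  qed
  moreover have "card {r \<in> {1,2}. (r, k+1) \<in> U \<union> ?C} = 2" unfolding card12 by auto
  ultimately show ?thesis using UC unfolding N_set_i_def N_set_blk by auto
qed



theorem lemma5p2:
  fixes k :: nat
  assumes "k \<ge> 1"
  shows "bij_betw (red k \<circ> contr k) {W \<in> M_circ (2 * k + 1). k + 1 \<notin> W} (N_set k)
       \<and> bij_betw (red k \<circ> contr k) {W \<in> M_circ (2 * k + 1). k + 1 \<in> W}
           (N_set_i k 1 \<union> {R_land})
       \<and> card (M_circ (2 * k + 1)) = card (N_set k) + card (N_set_i k 1) + 1
       \<and> card (M_circ (2 * k + 1)) = card (N_set k) + card (N_set_i (k + 1) 2)"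
proof -
  note k = assms
  let ?f = "red k \<circ> contr k"
  let ?A = "{W \<in> M_circ (2 * k + 1). k + 1 \<notin> W}"
  let ?B = "{W \<in> M_circ (2 * k + 1). k + 1 \<in> W}"
  have sub: "W \<subseteq> {1..2*k+1}" if "W \<in> M_circ (2*k+1)" for W
    using that unfolding M_circ_def by auto
  have fW: "?f W = g k ` (W - {k+1})" if "W \<in> M_circ (2*k+1)" for W
    using red_contr[OF sub[OF that]] by simp
  have bA: "bij_betw ?f ?A (N_set k)"
    unfolding bij_betw_def
  proof
    show "inj_on ?f ?A"
    proof (rule inj_onI)
      fix W1 W2 assume W: "W1 \<in> ?A" "W2 \<in> ?A" "?f W1 = ?f W2"
      then have "h k ` (g k ` (W1 - {k+1})) = h k ` (g k ` (W2 - {k+1}))" using fW by auto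
      moreover have "h k ` (g k ` (W1 - {k+1})) = W1 - {k+1}" using W(1) by (intro hgW sub) auto
      moreover have "h k ` (g k ` (W2 - {k+1})) = W2 - {k+1}" using W(2) by (intro hgW sub) auto
      ultimately have "W1 - {k+1} = W2 - {k+1}" by simp
      then show "W1 = W2" using W(1,2) by auto
    qed
    show "?f ` ?A = N_set k"
    proof
      show "?f ` ?A \<subseteq> N_set k" using A_fwd[OF k] fW by auto
      show "N_set k \<subseteq> ?f ` ?A"
      proof
        fix V assume "V \<in> N_set k"
        from A_bwd[OF k this] fW have "h k ` V \<in> ?A" "?f (h k ` V) = V" by auto
        then show "V \<in> ?f ` ?A" by (metis image_eqI)
      qed
    qed
  qed
  have bB: "bij_betw ?f ?B (N_set_i k 1 \<union> {R_land})"
    unfolding bij_betw_def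
  proof
    show "inj_on ?f ?B"
    proof (rule inj_onI)
      fix W1 W2 assume W: "W1 \<in> ?B" "W2 \<in> ?B" "?f W1 = ?f W2"
      then have "h k ` (g k ` (W1 - {k+1})) = h k ` (g k ` (W2 - {k+1}))" using fW by auto
      moreover have "h k ` (g k ` (W1 - {k+1})) = W1 - {k+1}" using W(1) by (intro hgW sub) auto
      moreover have "h k ` (g k ` (W2 - {k+1})) = W2 - {k+1}" using W(2) by (intro hgW sub) auto
      ultimately have "W1 - {k+1} = W2 - {k+1}" by simp
      then show "W1 = W2" using W(1,2) by (metis (no_types, lifting) insert_Diff mem_Collect_eq)
    qed
    show "?f ` ?B = N_set_i k 1 \<union> {R_land}"
    proof
      show "?f ` ?B \<subseteq> N_set_i k 1 \<union> {R_land}" using B_fwd[OF k] fW by auto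
      show "N_set_i k 1 \<union> {R_land} \<subseteq> ?f ` ?B"
      proof
        fix V assume "V \<in> N_set_i k 1 \<union> {R_land}"
        from B_bwd[OF k this] fW have "insert (k+1) (h k ` V) \<in> ?B" "?f (insert (k+1) (h k ` V)) = V"
          by auto
        then show "V \<in> ?f ` ?B" by (metis image_eqI)
      qed
    qed
  qed
  let ?C = "{(1::nat,k+1),(2::nat,k+1)}"
  have bC: "bij_betw (\<lambda>V. V - ?C) (N_set_i (k+1) 2) (N_set_i k 1 \<union> {R_land})"
    unfolding bij_betw_def
  proof
    have CV: "?C \<subseteq> V" if "V \<in> N_set_i (k+1) 2" for V
      using that unfolding N_set_i_def card12 by auto
    show "inj_on (\<lambda>V. V - ?C) (N_set_i (k+1) 2)"
    proof (rule inj_onI)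
      fix V1 V2 assume V: "V1 \<in> N_set_i (k+1) 2" "V2 \<in> N_set_i (k+1) 2" "V1 - ?C = V2 - ?C"
      then show "V1 = V2" using CV[OF V(1)] CV[OF V(2)] by blast
    qed
    show "(\<lambda>V. V - ?C) ` N_set_i (k+1) 2 = N_set_i k 1 \<union> {R_land}"
    proof
      show "(\<lambda>V. V - ?C) ` N_set_i (k+1) 2 \<subseteq> N_set_i k 1 \<union> {R_land}" using C_fwd by auto
      show "N_set_i k 1 \<union> {R_land} \<subseteq> (\<lambda>V. V - ?C) ` N_set_i (k+1) 2"
      proof
        fix U assume "U \<in> N_set_i k 1 \<union> {R_land}"
        from C_bwd[OF this] show "U \<in> (\<lambda>V. V - ?C) ` N_set_i (k+1) 2" by (metis image_eqI)
      qed
    qed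
  qed
  have finM: "finite (M_circ (2*k+1))"
    by (rule finite_subset[of _ "Pow {1..2*k+1}"]) (use sub in auto)
  have finN: "finite (N_set_i k 1)"
  proof (rule finite_subset[of _ "Pow (grid k)"])
    show "N_set_i k 1 \<subseteq> Pow (grid k)" unfolding N_set_i_def N_set_blk by auto
    show "finite (Pow (grid k))" unfolding grid_def by auto
  qed
  have nR: "R_land \<notin> N_set_i k 1" unfolding N_set_i_def R_land_def by auto
  have cU: "card (N_set_i k 1 \<union> {R_land}) = card (N_set_i k 1) + 1"
    using finN nR by simp
  have "M_circ (2*k+1) = ?A \<union> ?B" by auto
  moreover have "?A \<inter> ?B = {}" by auto
  ultimately have "card (M_circ (2*k+1)) = card ?A + card ?B"
    using finM by (metis (no_types, lifting) card_Un_disjoint finite_Un)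
  moreover have "card ?A = card (N_set k)" using bij_betw_same_card[OF bA] .
  moreover have "card ?B = card (N_set_i k 1) + 1" using bij_betw_same_card[OF bB] cU by simp
  moreover have "card (N_set_i (k+1) 2) = card (N_set_i k 1) + 1" using bij_betw_same_card[OF bC] cU by simp
  ultimately show ?thesis using bA bB by simp
qed


end
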